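(* Suppose that for all positive integers $s,t,k$ with $st \le k^2$ one has $R(s,t) \le R(k,k)$. Suppose moreover that the limit $\lim_{k \to \infty} \frac{\log(R(k,k))}{k}$ exists and equals $\mathcal{L}$. Then \[ f(n) = \big(\mathcal{L}^2 + o(1)\big)\frac{n}{(\log n)^2}, \] that is, $\lim_{n\to\infty} \frac{(\log n)^2}{n} f(n) = \mathcal{L}^2$.
   Context: All logarithms are in base 2. For positive integers $s,t$, the Ramsey number $R(s,t)$ is the minimum $n$ such that every red/blue edge-coloring of the complete graph $K_n$ contains a red clique on $s$ vertices or a blue clique on $t$ vertices. For a graph $G$, $\chi(G)$ is its chromatic number and $\omega(G)$ its clique number. For $n \in \mathbb{N}$, $f(n)$ is the maximum of $\chi(G)/\omega(G)$ over all graphs $G$ on $n$ vertices. Here $o(1)$ denotes a quantity tending to $0$ as $n \to \infty$. *)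

theory Defs
  imports Complex_Main
begin

definition ramsey_number :: "nat \<Rightarrow> nat \<Rightarrow> nat" where
  "ramsey_number s t = (LEAST n. \<forall>c :: nat \<Rightarrow> nat \<Rightarrow> bool. (\<forall>x y. c x y = c y x) \<longrightarrow>
      (\<exists>S. S \<subseteq> {0..<n} \<and> card S = s \<and> (\<forall>x\<in>S. \<forall>y\<in>S. x \<noteq> y \<longrightarrow> c x y)) \<or>
      (\<exists>S. S \<subseteq> {0..<n} \<and> card S = t \<and> (\<forall>x\<in>S. \<forall>y\<in>S. x \<noteq> y \<longrightarrow> \<not> c x y)))"

definition graph_on :: "nat \<Rightarrow> (nat \<times> nat) set \<Rightarrow> bool" where
  "graph_on n E \<longleftrightarrow> E \<subseteq> {0..<n} \<times> {0..<n} \<and> sym E \<and> irrefl E"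

definition clique_in :: "nat \<Rightarrow> (nat \<times> nat) set \<Rightarrow> nat set \<Rightarrow> bool" where
  "clique_in n E S \<longleftrightarrow> S \<subseteq> {0..<n} \<and> (\<forall>x\<in>S. \<forall>y\<in>S. x \<noteq> y \<longrightarrow> (x, y) \<in> E)"

definition clique_number :: "nat \<Rightarrow> (nat \<times> nat) set \<Rightarrow> nat" where
  "clique_number n E = Max {card S | S. clique_in n E S}"

definition proper_colouring :: "nat \<Rightarrow> (nat \<times> nat) set \<Rightarrow> nat \<Rightarrow> (nat \<Rightarrow> nat) \<Rightarrow> bool" where
  "proper_colouring n E k col \<longleftrightarrow> (\<forall>v<n. col v < k) \<and> (\<forall>(x, y)\<in>E. col x \<noteq> col y)"

definition chromatic_number :: "nat \<Rightarrow> (nat \<times> nat) set \<Rightarrow> nat" where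
  "chromatic_number n E = (LEAST k. \<exists>col. proper_colouring n E k col)"

definition f_ratio :: "nat \<Rightarrow> real" where
  "f_ratio n = Max {real (chromatic_number n E) / real (clique_number n E) | E. graph_on n E}"

end

theory Submission
  imports Defs
begin

definition rprop :: "nat \<Rightarrow> nat \<Rightarrow> nat set \<Rightarrow> (nat \<Rightarrow> nat \<Rightarrow> bool) \<Rightarrow> bool" where
  "rprop s t V c \<longleftrightarrow> (\<exists>S. S \<subseteq> V \<and> card S = s \<and> (\<forall>x\<in>S. \<forall>y\<in>S. x \<noteq> y \<longrightarrow> c x y)) \<or>
      (\<exists>S. S \<subseteq> V \<and> card S = t \<and> (\<forall>x\<in>S. \<forall>y\<in>S. x \<noteq> y \<longrightarrow> \<not> c x y))"

lemma ramsey_number_alt: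
  "ramsey_number s t = (LEAST n. \<forall>c. (\<forall>x y. c x y = c y x) \<longrightarrow> rprop s t {0..<n} c)"
  unfolding ramsey_number_def rprop_def by simp

lemma ramsey_es:
  assumes sym: "\<forall>x y. c x y = c y x"
  shows "finite V \<Longrightarrow> (s + t) choose s \<le> card V \<Longrightarrow> rprop s t V c"
proof (induction "s + t" arbitrary: s t V rule: less_induct)
  case less
  show ?case
  proof (cases "s = 0 \<or> t = 0")
    case True
    have "{} \<subseteq> V" "card {} = (0::nat)" by auto
    then show ?thesis unfolding rprop_def using True by blast
  next
    case False
    then obtain s' t' where s: "s = Suc s'" and t: "t = Suc t'" by (meson not0_implies_Suc)
    have eq1: "s + t = Suc (s' + t)" using s by simp
    have eq2: "s' + t = s + t'" using s t by simp
    have bin0: "(Suc (s'+t)) choose (Suc s') = ((s'+t) choose s') + ((s'+t) choose (Suc s'))"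
      by (rule binomial_Suc_Suc)
    have bin: "((s+t) choose s) = ((s' + t) choose s') + ((s + t') choose s)"
      using bin0 eq1 eq2 s by metis
    have pos: "(s' + t) choose s' \<ge> 1" by (simp add: Suc_le_eq zero_less_binomial)
    have "card V \<ge> 1" using less.prems bin pos by linarith
    then obtain v where v: "v \<in> V" by (metis card.empty ex_in_conv not_one_le_zero)
    define Rd where "Rd = {y \<in> V - {v}. c v y}"
    define Bl where "Bl = {y \<in> V - {v}. \<not> c v y}"
    have fin: "finite Rd" "finite Bl" using less.prems(1) unfolding Rd_def Bl_def by auto
    have un: "Rd \<union> Bl = V - {v}" "Rd \<inter> Bl = {}" unfolding Rd_def Bl_def by auto
    have "card Rd + card Bl = card V - 1"
      using card_Un_disjoint[OF fin un(2)] un(1) v less.prems(1) by simp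
    hence cases: "card Rd \<ge> (s' + t) choose s' \<or> card Bl \<ge> (s + t') choose s"
      using less.prems(2) bin by linarith
    show ?thesis
    proof (cases "card Rd \<ge> (s' + t) choose s'")
      case True
      have "rprop s' t Rd c" using less.hyps[of s' t Rd] True fin s by simp
      then show ?thesis unfolding rprop_def
      proof (elim disjE exE conjE)
        fix S assume S: "S \<subseteq> Rd" "card S = s'" "\<forall>x\<in>S. \<forall>y\<in>S. x \<noteq> y \<longrightarrow> c x y"
        have vS: "v \<notin> S" using S(1) unfolding Rd_def by auto
        have finS: "finite S" using S(1) fin(1) finite_subset by blast
        have "insert v S \<subseteq> V" using S(1) v unfolding Rd_def by auto
        moreover have "card (insert v S) = s" using vS finS S(2) s by simp
        moreover have "\<forall>x\<in>insert v S. \<forall>y\<in>insert v S. x \<noteq> y \<longrightarrow> c x y"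
          using S(1,3) sym unfolding Rd_def by auto
        ultimately show "(\<exists>S. S \<subseteq> V \<and> card S = s \<and> (\<forall>x\<in>S. \<forall>y\<in>S. x \<noteq> y \<longrightarrow> c x y)) \<or>
          (\<exists>S. S \<subseteq> V \<and> card S = t \<and> (\<forall>x\<in>S. \<forall>y\<in>S. x \<noteq> y \<longrightarrow> \<not> c x y))" by blast
      next
        fix S assume S: "S \<subseteq> Rd" "card S = t" "\<forall>x\<in>S. \<forall>y\<in>S. x \<noteq> y \<longrightarrow> \<not> c x y"
        have "S \<subseteq> V" using S(1) unfolding Rd_def by auto
        then show "(\<exists>S. S \<subseteq> V \<and> card S = s \<and> (\<forall>x\<in>S. \<forall>y\<in>S. x \<noteq> y \<longrightarrow> c x y)) \<or>
          (\<exists>S. S \<subseteq> V \<and> card S = t \<and> (\<forall>x\<in>S. \<forall>y\<in>S. x \<noteq> y \<longrightarrow> \<not> c x y))" using S by blast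
      qed
    next
      case False
      hence C: "card Bl \<ge> (s + t') choose s" using cases by simp
      have "rprop s t' Bl c" using less.hyps[of s t' Bl] C fin t by simp
      then show ?thesis unfolding rprop_def
      proof (elim disjE exE conjE)
        fix S assume S: "S \<subseteq> Bl" "card S = t'" "\<forall>x\<in>S. \<forall>y\<in>S. x \<noteq> y \<longrightarrow> \<not> c x y"
        have vS: "v \<notin> S" using S(1) unfolding Bl_def by auto
        have finS: "finite S" using S(1) fin(2) finite_subset by blast
        have "insert v S \<subseteq> V" using S(1) v unfolding Bl_def by auto
        moreover have "card (insert v S) = t" using vS finS S(2) t by simp
        moreover have "\<forall>x\<in>insert v S. \<forall>y\<in>insert v S. x \<noteq> y \<longrightarrow> \<not> c x y"
          using S(1,3) sym unfolding Bl_def by auto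
        ultimately show "(\<exists>S. S \<subseteq> V \<and> card S = s \<and> (\<forall>x\<in>S. \<forall>y\<in>S. x \<noteq> y \<longrightarrow> c x y)) \<or>
          (\<exists>S. S \<subseteq> V \<and> card S = t \<and> (\<forall>x\<in>S. \<forall>y\<in>S. x \<noteq> y \<longrightarrow> \<not> c x y))" by blast
      next
        fix S assume S: "S \<subseteq> Bl" "card S = s" "\<forall>x\<in>S. \<forall>y\<in>S. x \<noteq> y \<longrightarrow> c x y"
        have "S \<subseteq> V" using S(1) unfolding Bl_def by auto
        then show "(\<exists>S. S \<subseteq> V \<and> card S = s \<and> (\<forall>x\<in>S. \<forall>y\<in>S. x \<noteq> y \<longrightarrow> c x y)) \<or>
          (\<exists>S. S \<subseteq> V \<and> card S = t \<and> (\<forall>x\<in>S. \<forall>y\<in>S. x \<noteq> y \<longrightarrow> \<not> c x y))" using S by blast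
      qed
    qed
  qed
qed

lemma ex_prop: "\<forall>c. (\<forall>x y. c x y = c y x) \<longrightarrow> rprop s t {0..<(s+t) choose s} c"
proof (intro allI impI)
  fix c :: "nat \<Rightarrow> nat \<Rightarrow> bool" assume "\<forall>x y. c x y = c y x"
  then show "rprop s t {0..<(s+t) choose s} c" using ramsey_es[of c "{0..<(s+t) choose s}" s t] by simp
qed

lemma rn_prop: "\<forall>c. (\<forall>x y. c x y = c y x) \<longrightarrow> rprop s t {0..<ramsey_number s t} c"
  unfolding ramsey_number_alt
  by (rule LeastI[of _ "(s+t) choose s"]) (rule ex_prop)

lemma rn_le: "ramsey_number s t \<le> (s+t) choose s"
  unfolding ramsey_number_alt
  by (rule Least_le) (rule ex_prop)

lemma rn_fail: assumes "n < ramsey_number s t"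
  shows "\<exists>c. (\<forall>x y. c x y = c y x) \<and> \<not> rprop s t {0..<n} c"
proof -
  have "\<not> (\<forall>c. (\<forall>x y. c x y = c y x) \<longrightarrow> rprop s t {0..<n} c)"
    using not_less_Least[OF assms[unfolded ramsey_number_alt]] .
  then show ?thesis by simp
qed

lemma rn_ge: "k \<le> ramsey_number k k"
proof -
  have "rprop k k {0..<ramsey_number k k} (\<lambda>_ _. True)" using rn_prop[of k k, THEN spec[of _ "\<lambda>_ _. True"]] by simp
  then obtain S where "S \<subseteq> {0..<ramsey_number k k}" "card S = k" unfolding rprop_def by blast
  then have "card S \<le> card {0..<ramsey_number k k}" by (intro card_mono) auto
  then show ?thesis using \<open>card S = k\<close> by simp
qed

lemma rn_transfer:
  assumes "finite V" "ramsey_number s t \<le> card V" "\<forall>x y. c x y = c y x"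
  shows "rprop s t V c"
proof -
  define R where "R = ramsey_number s t"
  obtain V' where V': "V' \<subseteq> V" "card V' = R" and finV': "finite V'"
    using obtain_subset_with_card_n[OF assms(2)] unfolding R_def by blast
  obtain g where g0: "bij_betw g {0..<card V'} V'" using ex_bij_betw_nat_finite[OF finV'] by blast
  have g: "bij_betw g {0..<R} V'" using g0 V'(2) by simp
  define c' where "c' x y = c (g x) (g y)" for x y
  have symc': "\<forall>x y. c' x y = c' y x" using assms(3) unfolding c'_def by simp
  have "rprop s t {0..<R} c'" using rn_prop[of s t, THEN spec[of _ c'], THEN mp, OF symc'] unfolding R_def .
  then show ?thesis unfolding rprop_def
  proof (elim disjE exE conjE)
    fix S assume S: "S \<subseteq> {0..<R}" "card S = s" "\<forall>x\<in>S. \<forall>y\<in>S. x \<noteq> y \<longrightarrow> c' x y"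
    have inj: "inj_on g S" using inj_on_subset[OF bij_betw_imp_inj_on[OF g] S(1)] .
    have "g ` S \<subseteq> V" using bij_betw_imp_surj_on[OF g] S(1) V'(1) by blast
    moreover have "card (g ` S) = s" using card_image[OF inj] S(2) by simp
    moreover have "\<forall>x\<in>g ` S. \<forall>y\<in>g ` S. x \<noteq> y \<longrightarrow> c x y" using S(3) unfolding c'_def by auto
    ultimately show "(\<exists>S. S \<subseteq> V \<and> card S = s \<and> (\<forall>x\<in>S. \<forall>y\<in>S. x \<noteq> y \<longrightarrow> c x y)) \<or>
          (\<exists>S. S \<subseteq> V \<and> card S = t \<and> (\<forall>x\<in>S. \<forall>y\<in>S. x \<noteq> y \<longrightarrow> \<not> c x y))" by blast
  next
    fix S assume S: "S \<subseteq> {0..<R}" "card S = t" "\<forall>x\<in>S. \<forall>y\<in>S. x \<noteq> y \<longrightarrow> \<not> c' x y"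
    have inj: "inj_on g S" using inj_on_subset[OF bij_betw_imp_inj_on[OF g] S(1)] .
    have "g ` S \<subseteq> V" using bij_betw_imp_surj_on[OF g] S(1) V'(1) by blast
    moreover have "card (g ` S) = t" using card_image[OF inj] S(2) by simp
    moreover have "\<forall>x\<in>g ` S. \<forall>y\<in>g ` S. x \<noteq> y \<longrightarrow> \<not> c x y" using S(3) unfolding c'_def by auto
    ultimately show "(\<exists>S. S \<subseteq> V \<and> card S = s \<and> (\<forall>x\<in>S. \<forall>y\<in>S. x \<noteq> y \<longrightarrow> c x y)) \<or>
          (\<exists>S. S \<subseteq> V \<and> card S = t \<and> (\<forall>x\<in>S. \<forall>y\<in>S. x \<noteq> y \<longrightarrow> \<not> c x y))" by blast
  qed
qed

lemma graphs_finite: "finite {E. graph_on n E}"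
proof -
  have "{E. graph_on n E} \<subseteq> Pow ({0..<n} \<times> {0..<n})" unfolding graph_on_def by auto
  then show ?thesis by (rule finite_subset) simp
qed

lemma graph_empty: "graph_on n {}"
  unfolding graph_on_def sym_def irrefl_def by simp

lemma f_ratio_ge:
  assumes "graph_on n E"
  shows "real (chromatic_number n E) / real (clique_number n E) \<le> f_ratio n"
proof -
  have fin: "finite {real (chromatic_number n E) / real (clique_number n E) | E. graph_on n E}"
    using finite_image_set[OF graphs_finite] .
  show ?thesis unfolding f_ratio_def by (rule Max_ge[OF fin]) (use assms in blast)
qed

lemma f_ratio_le:
  assumes "\<And>E. graph_on n E \<Longrightarrow> real (chromatic_number n E) / real (clique_number n E) \<le> b"
  shows "f_ratio n \<le> b"
proof -
  have fin: "finite {real (chromatic_number n E) / real (clique_number n E) | E. graph_on n E}"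
    using finite_image_set[OF graphs_finite] .
  have ne: "{real (chromatic_number n E) / real (clique_number n E) | E. graph_on n E} \<noteq> {}"
    using graph_empty by blast
  show ?thesis unfolding f_ratio_def using Max_le_iff[OF fin ne] assms by blast
qed

lemma clique_fin: "finite {card S | S. clique_in n E S}"
proof -
  have "{card S | S. clique_in n E S} \<subseteq> {0..n}"
  proof
    fix m assume "m \<in> {card S | S. clique_in n E S}"
    then obtain S where "m = card S" "S \<subseteq> {0..<n}" unfolding clique_in_def by blast
    then have "m \<le> card {0..<n}" using card_mono by blast
    then show "m \<in> {0..n}" by simp
  qed
  then show ?thesis using finite_subset[OF _ finite_atLeastAtMost] by blast
qed

lemma clique_le: "clique_in n E S \<Longrightarrow> card S \<le> clique_number n E"
  unfolding clique_number_def by (rule Max_ge[OF clique_fin]) blast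

lemma clique_number_le:
  assumes "\<And>S. clique_in n E S \<Longrightarrow> card S \<le> k"
  shows "clique_number n E \<le> k"
proof -
  have ne: "{card S | S. clique_in n E S} \<noteq> {}"
    using clique_in_def[of n E "{}"] by auto
  show ?thesis unfolding clique_number_def using Max_le_iff[OF clique_fin ne] assms by blast
qed

lemma clique_pos: assumes "0 < n" shows "1 \<le> clique_number n E"
proof -
  have "clique_in n E {0}" unfolding clique_in_def using assms by auto
  from clique_le[OF this] show ?thesis by simp
qed

lemma chrom_le: "proper_colouring n E K col \<Longrightarrow> chromatic_number n E \<le> K"
  unfolding chromatic_number_def by (rule Least_le) blast

lemma chrom_ex:
  assumes "graph_on n E"
  shows "\<exists>col. proper_colouring n E (chromatic_number n E) col"
proof -
  have "proper_colouring n E n id"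
    using assms unfolding proper_colouring_def graph_on_def irrefl_def by auto
  then have "\<exists>k. Ex (proper_colouring n E k)" by blast
  then show ?thesis unfolding chromatic_number_def by (rule LeastI_ex)
qed

lemma chrom_le_n: "graph_on n E \<Longrightarrow> chromatic_number n E \<le> n"
proof -
  assume "graph_on n E"
  then have "proper_colouring n E n id"
    unfolding proper_colouring_def graph_on_def irrefl_def by auto
  then show ?thesis by (rule chrom_le)
qed

lemma greedy_gen:
  fixes n :: nat and E :: "(nat \<times> nat) set"
  assumes irr: "\<forall>x. (x,x) \<notin> E" and t: "1 \<le> t"
    and ind: "\<forall>U. U \<subseteq> {0..<n} \<longrightarrow> M \<le> card U \<longrightarrow> (\<exists>I. I \<subseteq> U \<and> card I = t \<and> (\<forall>x\<in>I. \<forall>y\<in>I. (x,y) \<notin> E))"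
  shows "V \<subseteq> {0..<n} \<Longrightarrow> \<exists>col. (\<forall>v\<in>V. col v < card V div t + M) \<and> (\<forall>x\<in>V. \<forall>y\<in>V. (x,y)\<in>E \<longrightarrow> col x \<noteq> col y)"
proof (induction "card V" arbitrary: V rule: less_induct)
  case less
  have finV: "finite V" by (rule finite_subset[OF less.prems]) simp
  show ?case
  proof (cases "M \<le> card V")
    case True
    have "\<exists>I. I \<subseteq> V \<and> card I = t \<and> (\<forall>x\<in>I. \<forall>y\<in>I. (x,y) \<notin> E)"
      using ind less.prems True by simp
    then obtain I where I: "I \<subseteq> V" "card I = t" "\<forall>x\<in>I. \<forall>y\<in>I. (x,y) \<notin> E"
      by blast
    have finI: "finite I" using I(1) finV finite_subset by blast
    have tV: "t \<le> card V" using card_mono[OF finV I(1)] I(2) by simp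
    have cD: "card (V - I) = card V - t" using card_Diff_subset[OF finI I(1)] I(2) by simp
    have lt: "card (V - I) < card V" using cD t tV by simp
    have sub: "V - I \<subseteq> {0..<n}" using less.prems by blast
    obtain col' where col': "\<forall>v\<in>V-I. col' v < card (V-I) div t + M"
        "\<forall>x\<in>V-I. \<forall>y\<in>V-I. (x,y)\<in>E \<longrightarrow> col' x \<noteq> col' y"
      using less.hyps[OF lt sub] by blast
    define K' where "K' = card (V - I) div t + M"
    have K'eq: "K' + 1 = card V div t + M"
      unfolding K'_def cD using le_div_geq[of t "card V"] t tV by simp
    define col where "col v = (if v \<in> I then K' else col' v)" for v
    have "\<forall>v\<in>V. col v < card V div t + M"
    proof
      fix v assume v: "v \<in> V"
      show "col v < card V div t + M"
      proof (cases "v \<in> I")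
        case True
        then show ?thesis using K'eq unfolding col_def by simp
      next
        case False
        then have "col' v < K'" using col'(1) v unfolding K'_def by simp
        then show ?thesis using K'eq False unfolding col_def by simp
      qed
    qed
    moreover have "\<forall>x\<in>V. \<forall>y\<in>V. (x,y)\<in>E \<longrightarrow> col x \<noteq> col y"
    proof (intro ballI impI)
      fix x y assume xy: "x \<in> V" "y \<in> V" "(x,y) \<in> E"
      show "col x \<noteq> col y"
      proof (cases "x \<in> I")
        case True
        show ?thesis
        proof (cases "y \<in> I")
          case True
          then show ?thesis using \<open>x \<in> I\<close> I(3) xy(3) by blast
        next
          case False
          have "col' y < K'" using col'(1) xy(2) False unfolding K'_def by simp
          then show ?thesis using \<open>x \<in> I\<close> False unfolding col_def by simp
        qed
      next
        case False
        show ?thesis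
        proof (cases "y \<in> I")
          case True
          have "col' x < K'" using col'(1) xy(1) \<open>x \<notin> I\<close> unfolding K'_def by simp
          then show ?thesis using \<open>x \<notin> I\<close> True unfolding col_def by simp
        next
          case False
          then show ?thesis using \<open>x \<notin> I\<close> col'(2) xy unfolding col_def by auto
        qed
      qed
    qed
    ultimately show ?thesis by blast
  next
    case False
    obtain g where g: "bij_betw g V {0..<card V}" using ex_bij_betw_finite_nat[OF finV] by blast
    have "\<forall>v\<in>V. g v < card V div t + M"
    proof
      fix v assume "v \<in> V"
      then have "g v \<in> {0..<card V}" using bij_betw_apply[OF g] by blast
      then show "g v < card V div t + M" using False by simp
    qed
    moreover have "\<forall>x\<in>V. \<forall>y\<in>V. (x,y)\<in>E \<longrightarrow> g x \<noteq> g y"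
    proof (intro ballI impI)
      fix x y assume xy: "x \<in> V" "y \<in> V" "(x,y) \<in> E"
      have "x \<noteq> y" using irr xy(3) by blast
      then show "g x \<noteq> g y" using inj_on_eq_iff[OF bij_betw_imp_inj_on[OF g] xy(1,2)] by simp
    qed
    ultimately show ?thesis by blast
  qed
qed

lemma greedy:
  assumes "graph_on n E" "1 \<le> t"
    and ind: "\<And>U. U \<subseteq> {0..<n} \<Longrightarrow> M \<le> card U \<Longrightarrow> \<exists>I. I \<subseteq> U \<and> card I = t \<and> (\<forall>x\<in>I. \<forall>y\<in>I. (x,y) \<notin> E)"
  shows "chromatic_number n E \<le> n div t + M"
proof -
  have irr: "\<forall>x. (x,x) \<notin> E" using assms(1) unfolding graph_on_def irrefl_def by blast
  have ind': "\<forall>U. U \<subseteq> {0..<n} \<longrightarrow> M \<le> card U \<longrightarrow> (\<exists>I. I \<subseteq> U \<and> card I = t \<and> (\<forall>x\<in>I. \<forall>y\<in>I. (x,y) \<notin> E))"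
    using ind by blast
  have "\<exists>col. (\<forall>v\<in>{0..<n}. col v < card {0..<n} div t + M) \<and>
      (\<forall>x\<in>{0..<n}. \<forall>y\<in>{0..<n}. (x,y)\<in>E \<longrightarrow> col x \<noteq> col y)"
    using greedy_gen[OF irr assms(2) ind', of "{0..<n}"] by simp
  then obtain col where col: "\<forall>v\<in>{0..<n}. col v < card {0..<n} div t + M"
      "\<forall>x\<in>{0..<n}. \<forall>y\<in>{0..<n}. (x,y)\<in>E \<longrightarrow> col x \<noteq> col y"
    by blast
  have "proper_colouring n E (n div t + M) col"
    unfolding proper_colouring_def
  proof (intro conjI allI impI ballI)
    fix v assume "v < n" then show "col v < n div t + M" using col(1) by simp
  next
    fix p assume "p \<in> E"
    then obtain x y where p: "p = (x,y)" "x < n" "y < n" using assms(1) unfolding graph_on_def by auto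
    then show "case p of (x, y) \<Rightarrow> col x \<noteq> col y" using col(2) \<open>p \<in> E\<close> by simp
  qed
  then show ?thesis by (rule chrom_le)
qed

lemma indep_from_ramsey:
  assumes g: "graph_on n E" and U: "U \<subseteq> {0..<n}"
    and R: "ramsey_number (clique_number n E + 1) t \<le> card U"
  shows "\<exists>I. I \<subseteq> U \<and> card I = t \<and> (\<forall>x\<in>I. \<forall>y\<in>I. (x,y) \<notin> E)"
proof -
  define c where "c x y = ((x,y) \<in> E)" for x y
  have sE: "sym E" and irr: "irrefl E" using g unfolding graph_on_def by auto
  have symc: "\<forall>x y. c x y = c y x" using sE unfolding sym_def c_def by blast
  have finU: "finite U" by (rule finite_subset[OF U]) simp
  have "rprop (clique_number n E + 1) t U c" using rn_transfer[OF finU R symc] .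
  then show ?thesis unfolding rprop_def
  proof (elim disjE exE conjE)
    fix S assume S: "S \<subseteq> U" "card S = clique_number n E + 1" "\<forall>x\<in>S. \<forall>y\<in>S. x \<noteq> y \<longrightarrow> c x y"
    have "clique_in n E S" unfolding clique_in_def using S(1,3) U unfolding c_def by auto
    from clique_le[OF this] S(2) show ?thesis by simp
  next
    fix S assume S: "S \<subseteq> U" "card S = t" "\<forall>x\<in>S. \<forall>y\<in>S. x \<noteq> y \<longrightarrow> \<not> c x y"
    have irr': "\<forall>a. (a, a) \<notin> E" using irr unfolding irrefl_def .
    have "\<forall>x\<in>S. \<forall>y\<in>S. (x,y) \<notin> E"
    proof (intro ballI)
      fix x y assume xy: "x \<in> S" "y \<in> S"
      show "(x,y) \<notin> E"
      proof (cases "x = y")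
        case True then show ?thesis using irr' by simp
      next
        case False then show ?thesis using S(3) xy unfolding c_def by simp
      qed
    qed
    then show ?thesis using S(1,2) by blast
  qed
qed

lemma lower_graph:
  assumes n: "0 < n" and k: "0 < k" and nR: "n < ramsey_number (k+1) (k+1)"
  shows "real n / (real k)^2 \<le> f_ratio n"
proof -
  obtain c where symc: "\<forall>x y. c x y = c y x" and nr: "\<not> rprop (k+1) (k+1) {0..<n} c"
    using rn_fail[OF nR] by blast
  define E where "E = {(x,y). x < n \<and> y < n \<and> x \<noteq> y \<and> c x y}"
  have g: "graph_on n E" unfolding graph_on_def E_def sym_def irrefl_def using symc by auto
  have noR: "\<And>S. S \<subseteq> {0..<n} \<Longrightarrow> card S = k+1 \<Longrightarrow> \<not> (\<forall>x\<in>S. \<forall>y\<in>S. x \<noteq> y \<longrightarrow> c x y)"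
    using nr unfolding rprop_def by blast
  have noB: "\<And>S. S \<subseteq> {0..<n} \<Longrightarrow> card S = k+1 \<Longrightarrow> \<not> (\<forall>x\<in>S. \<forall>y\<in>S. x \<noteq> y \<longrightarrow> \<not> c x y)"
    using nr unfolding rprop_def by blast
  have w: "clique_number n E \<le> k"
  proof (rule clique_number_le, rule ccontr)
    fix S assume S: "clique_in n E S" "\<not> card S \<le> k"
    have kS: "k+1 \<le> card S" using S(2) by simp
    obtain T where T: "T \<subseteq> S" "card T = k+1" using obtain_subset_with_card_n[OF kS] by blast
    have "T \<subseteq> {0..<n}" "\<forall>x\<in>T. \<forall>y\<in>T. x \<noteq> y \<longrightarrow> c x y"
      using S(1) T(1) unfolding clique_in_def E_def by auto
    then show False using noR T(2) by blast
  qed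
  have w1: "1 \<le> clique_number n E" using clique_pos[OF n] .
  obtain col where col: "proper_colouring n E (chromatic_number n E) col" using chrom_ex[OF g] by blast
  define K where "K = chromatic_number n E"
  define C where "C i = {v \<in> {0..<n}. col v = i}" for i
  have Cle: "card (C i) \<le> k" for i
  proof (rule ccontr)
    assume "\<not> card (C i) \<le> k"
    then have kC: "k+1 \<le> card (C i)" by simp
    obtain T where T: "T \<subseteq> C i" "card T = k+1" using obtain_subset_with_card_n[OF kC] by blast
    have "T \<subseteq> {0..<n}" using T(1) unfolding C_def by auto
    moreover have "\<forall>x\<in>T. \<forall>y\<in>T. x \<noteq> y \<longrightarrow> \<not> c x y"
    proof (intro ballI impI notI)
      fix x y assume xy: "x \<in> T" "y \<in> T" "x \<noteq> y" "c x y"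
      then have "(x,y) \<in> E" using T(1) unfolding C_def E_def by auto
      then have "col x \<noteq> col y" using col unfolding proper_colouring_def by auto
      then show False using xy T(1) unfolding C_def by auto
    qed
    ultimately show False using noB T(2) by blast
  qed
  have cover: "{0..<n} \<subseteq> (\<Union>i\<in>{..<K}. C i)"
    using col unfolding proper_colouring_def C_def K_def by auto
  have finU: "finite (\<Union>i\<in>{..<K}. C i)" unfolding C_def by auto
  have "n \<le> card (\<Union>i\<in>{..<K}. C i)"
    using card_mono[OF finU cover] by simp
  also have "\<dots> \<le> (\<Sum>i\<in>{..<K}. card (C i))" by (rule card_UN_le) simp
  also have "\<dots> \<le> (\<Sum>i\<in>{..<K}. k)" by (rule sum_mono) (rule Cle)
  finally have nK: "n \<le> K * k" by simp
  have "real n / (real k)^2 \<le> real K / real k"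
  proof -
    have "real n \<le> real K * real k" using nK by (metis of_nat_le_iff of_nat_mult)
    then show ?thesis using k by (simp add: field_simps power2_eq_square)
  qed
  also have "\<dots> \<le> real K / real (clique_number n E)"
    using w w1 by (intro divide_left_mono) auto
  also have "\<dots> \<le> f_ratio n" using f_ratio_ge[OF g] unfolding K_def .
  finally show ?thesis .
qed

lemma real_div_le: "0 < t \<Longrightarrow> real (n div t) \<le> real n / real t"
proof -
  assume t: "0 < t"
  have "(n div t) * t \<le> n" by (simp add: div_times_less_eq_dividend)
  then have "real (n div t) * real t \<le> real n" by (metis of_nat_le_iff of_nat_mult)
  then show ?thesis using t by (simp add: field_simps)
qed

lemma div_succ_bound: fixes m d :: nat shows "0 < d \<Longrightarrow> m < (m div d + 1) * d"
proof -
  assume d: "0 < d"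
  have e: "m = (m div d) * d + m mod d" by simp
  moreover have "m mod d < d" using d by simp
  ultimately have "m < (m div d) * d + d" by linarith
  then show ?thesis by (simp add: algebra_simps)
qed

lemma binom_thr:
  fixes s t :: nat
  shows "(s + t) choose s \<le> (s + t) ^ t"
proof -
  have "(s + t) choose s = (s + t) choose t"
    using binomial_symmetric[of s "s+t"] by simp
  also have "\<dots> \<le> (s+t)^t" by (rule binomial_le_pow) simp
  finally show ?thesis .
qed

lemma binom_thr2:
  fixes s t :: nat
  shows "(s + t) choose s \<le> (s + t) ^ s"
  by (rule binomial_le_pow) simp

lemma indep_thr:
  assumes g: "graph_on n E" and U: "U \<subseteq> {0..<n}"
    and R: "ramsey_number (clique_number n E + 1) t \<le> M" and M: "M \<le> card U"
  shows "\<exists>I. I \<subseteq> U \<and> card I = t \<and> (\<forall>x\<in>I. \<forall>y\<in>I. (x,y) \<notin> E)"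
  by (rule indep_from_ramsey[OF g U]) (rule order_trans[OF R M])

lemma core_upper:
  fixes n k T :: nat and x A \<beta> :: real
  assumes H: "\<forall>s t k :: nat. 0 < s \<longrightarrow> 0 < t \<longrightarrow> 0 < k \<longrightarrow> s * t \<le> k ^ 2 \<longrightarrow>
             ramsey_number s t \<le> ramsey_number k k"
    and n: "2 \<le> n" and x: "x = log 2 (real n)" and T: "1 \<le> T" and k: "1 \<le> k" and A: "0 < A"
    and hA: "A \<le> \<beta>"
    and hB: "x^2 / (real k)^3 + x^2 * real ((T+1+k^3)^(T+1)) / real n \<le> \<beta>"
    and hC: "\<And>w::nat. T < w \<Longrightarrow> real w < x^2 / A \<Longrightarrow>
       x^2 * (1 + 1 / real T)^2 / (real k)^2 + x^2 * (real (ramsey_number k k) + real ((w+1+T)^T)) / real n \<le> \<beta>"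
    and g: "graph_on n E"
  shows "x^2 / real n * (real (chromatic_number n E) / real (clique_number n E)) \<le> \<beta>"
proof -
  define w where "w = clique_number n E"
  define \<chi> where "\<chi> = chromatic_number n E"
  have w1: "1 \<le> w" unfolding w_def using clique_pos n by simp
  have npos: "0 < real n" using n by simp
  have x1: "1 \<le> x"
  proof -
    have "log 2 2 \<le> log 2 (real n)" using n by (subst log_le_cancel_iff) auto
    then show ?thesis using x by simp
  qed
  have chin: "\<chi> \<le> n" unfolding \<chi>_def using chrom_le_n[OF g] .
  have ratio_le_chi: "real \<chi> / real w \<le> real \<chi>"
  proof -
    have "real \<chi> / real w \<le> real \<chi> / 1" using w1 by (intro divide_left_mono) auto
    then show ?thesis by simp
  qed
  show ?thesis
  proof (cases "x^2 / A \<le> real w")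
    case True
    have "x^2 / real n * (real \<chi> / real w) \<le> x^2 / real n * (real n / real w)"
      using chin w1 npos by (intro mult_left_mono divide_right_mono) auto
    also have "\<dots> = x^2 / real w" using npos by simp
    also have "\<dots> \<le> A"
      using True w1 A by (simp add: divide_le_eq field_simps)
    finally show ?thesis using hA unfolding w_def \<chi>_def by simp
  next
    case notA: False
    show ?thesis
    proof (cases "w \<le> T")
      case True
      define t where "t = k^3"
      define M where "M = (T+1+k^3)^(T+1)"
      have t1: "1 \<le> t" unfolding t_def using k by simp
      have RM: "ramsey_number (w + 1) t \<le> M"
      proof -
        have "ramsey_number (w + 1) t \<le> ((w+1) + t) choose (w+1)" by (rule rn_le)
        also have "\<dots> \<le> ((w+1) + t) ^ (w+1)" by (rule binom_thr2)
        also have "\<dots> \<le> (T+1+t) ^ (w+1)" using True by (intro power_mono) auto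
        also have "\<dots> \<le> (T+1+t) ^ (T+1)" using True by (intro power_increasing) auto
        finally show ?thesis unfolding M_def t_def .
      qed
      have RM': "ramsey_number (clique_number n E + 1) t \<le> M" using RM unfolding w_def .
      have chiB: "\<chi> \<le> n div t + M" unfolding \<chi>_def
        by (rule greedy[OF g t1], rule indep_thr[OF g _ RM'], assumption+)
      have "real \<chi> \<le> real n / real t + real M"
      proof -
        have "real \<chi> \<le> real (n div t + M)" using chiB by (simp only: of_nat_le_iff)
        also have "\<dots> = real (n div t) + real M" by simp
        also have "\<dots> \<le> real n / real t + real M" using real_div_le[of t n] t1 by simp
        finally show ?thesis .
      qed
      then have "x^2 / real n * (real \<chi> / real w) \<le> x^2 / real n * (real n / real t + real M)"
        using ratio_le_chi npos by (intro mult_left_mono) auto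
      also have "\<dots> = x^2 / real t + x^2 * real M / real n" using npos by (simp add: field_simps)
      also have "\<dots> \<le> \<beta>" using hB unfolding t_def M_def by simp
      finally show ?thesis unfolding w_def \<chi>_def .
    next
      case notB: False
      have wT: "T < w" using notB by simp
      have wA: "real w < x^2 / A" using notA by simp
      define t0 where "t0 = k^2 div (w+1)"
      define t where "t = (if T \<le> t0 then t0 else T)"
      define M where "M = ramsey_number k k + (w+1+T)^T"
      have t1: "1 \<le> t" unfolding t_def using T by auto
      have RM: "ramsey_number (w + 1) t \<le> M"
      proof (cases "T \<le> t0")
        case True
        have dd: "k^2 div (w+1) * (w+1) \<le> k^2" by (rule div_times_less_eq_dividend)
        have "(w+1) * t0 \<le> k^2" unfolding t0_def using dd by (simp only: mult.commute)
        then have "ramsey_number (w + 1) t0 \<le> ramsey_number k k"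
          using H t1 True k unfolding t_def by simp
        then show ?thesis unfolding t_def M_def using True by simp
      next
        case False
        have "ramsey_number (w + 1) T \<le> ((w+1) + T) choose (w+1)" by (rule rn_le)
        also have "\<dots> \<le> ((w+1) + T) ^ T" by (rule binom_thr)
        finally show ?thesis unfolding t_def M_def using False by simp
      qed
      have RM': "ramsey_number (clique_number n E + 1) t \<le> M" using RM unfolding w_def .
      have chiC: "\<chi> \<le> n div t + M" unfolding \<chi>_def
        by (rule greedy[OF g t1], rule indep_thr[OF g _ RM'], assumption+)
      have kb: "(real k)^2 \<le> real t * real w * (1 + 1 / real T)^2"
      proof -
        have Tpos: "0 < real T" using T by simp
        have kk: "k^2 < (t0 + 1) * (w + 1)" unfolding t0_def by (rule div_succ_bound) simp
        then have "real (k^2) < real ((t0 + 1) * (w + 1))" by (simp only: of_nat_less_iff)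
        then have kkr: "(real k)^2 < (real t0 + 1) * (real w + 1)" by (simp add: algebra_simps)
        have wb: "real w + 1 \<le> real w * (1 + 1 / real T)"
        proof -
          have "1 \<le> real w / real T" using wT Tpos by (simp add: le_divide_eq)
          then show ?thesis by (simp add: algebra_simps)
        qed
        have w0: "0 \<le> real w" by simp
        show ?thesis
        proof (cases "T \<le> t0")
          case True
          have tb: "real t0 + 1 \<le> real t0 * (1 + 1 / real T)"
          proof -
            have "1 \<le> real t0 / real T" using True Tpos by (simp add: le_divide_eq)
            then show ?thesis by (simp add: algebra_simps)
          qed
          have "(real t0 + 1) * (real w + 1) \<le> (real t0 * (1 + 1 / real T)) * (real w * (1 + 1 / real T))"
            using tb wb by (intro mult_mono) auto
          then show ?thesis using kkr True unfolding t_def by (simp add: power2_eq_square algebra_simps)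
        next
          case False
          have tb: "real t0 + 1 \<le> real T" using False by simp
          have "(real t0 + 1) * (real w + 1) \<le> real T * (real w * (1 + 1 / real T))"
            using tb wb by (intro mult_mono) auto
          also have "\<dots> \<le> real T * (real w * (1 + 1 / real T)) * (1 + 1 / real T)"
          proof -
            have "0 \<le> real T * (real w * (1 + 1 / real T))" using Tpos by simp
            moreover have "1 \<le> 1 + 1 / real T" using Tpos by simp
            ultimately show ?thesis using mult_left_mono[of 1 "1 + 1 / real T" "real T * (real w * (1 + 1 / real T))"] by simp
          qed
          finally show ?thesis using kkr False unfolding t_def by (simp add: power2_eq_square algebra_simps)
        qed
      qed
      have tpos: "0 < real t" using t1 by simp
      have wpos: "0 < real w" using w1 by simp
      have "real \<chi> \<le> real n / real t + real M"
      proof -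
        have "real \<chi> \<le> real (n div t + M)" using chiC by (simp only: of_nat_le_iff)
        also have "\<dots> = real (n div t) + real M" by simp
        also have "\<dots> \<le> real n / real t + real M" using real_div_le[of t n] t1 by simp
        finally show ?thesis .
      qed
      then have "real \<chi> / real w \<le> (real n / real t + real M) / real w"
        using wpos by (simp add: divide_right_mono)
      also have "\<dots> = real n / (real t * real w) + real M / real w" using wpos tpos by (simp add: field_simps)
      also have "\<dots> \<le> real n * (1 + 1 / real T)^2 / (real k)^2 + real M"
      proof (rule add_mono)
        have k2: "0 < (real k)^2" using k by simp
        show "real n / (real t * real w) \<le> real n * (1 + 1 / real T)^2 / (real k)^2"
          using kb k2 tpos wpos npos by (simp add: field_simps mult_left_mono)
        show "real M / real w \<le> real M" using w1 by (simp add: divide_le_eq mult_le_cancel_left1)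
      qed
      finally have rb: "real \<chi> / real w \<le> real n * (1 + 1 / real T)^2 / (real k)^2 + real M" .
      have "x^2 / real n * (real \<chi> / real w) \<le> x^2 / real n * (real n * (1 + 1 / real T)^2 / (real k)^2 + real M)"
        using rb npos by (intro mult_left_mono) auto
      also have "\<dots> = x^2 * (1 + 1 / real T)^2 / (real k)^2 + x^2 * real M / real n"
        using npos by (simp add: field_simps)
      also have "\<dots> \<le> \<beta>" using hC[OF wT wA] unfolding M_def by simp
      finally show ?thesis unfolding w_def \<chi>_def .
    qed
  qed
qed

lemma logpow:
  fixes b c :: real
  assumes b: "0 < b" and c: "0 < c"
  shows "eventually (\<lambda>x::real. x^m \<le> c * 2 powr (b*x)) at_top"
proof -
  define q where "q = b * ln 2"
  have q: "0 < q" using b by (simp add: q_def)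
  have lim: "((\<lambda>z::real. z^m / exp z) \<longlongrightarrow> 0) at_top" by (rule tendsto_power_div_exp_0)
  have fq: "filterlim (\<lambda>x::real. q * x) at_top at_top"
    by (rule filterlim_tendsto_pos_mult_at_top[OF tendsto_const q filterlim_ident])
  have lim2: "((\<lambda>x. (q*x)^m / exp (q*x)) \<longlongrightarrow> 0) at_top" using filterlim_compose[OF lim fq] .
  have cq: "0 < c * q^m" using c q by simp
  have ev1: "eventually (\<lambda>x. (q*x)^m / exp (q*x) < c * q^m) at_top"
    by (rule order_tendstoD(2)[OF lim2 cq])
  have ev2: "eventually (\<lambda>x::real. 0 < x) at_top" by (rule eventually_gt_at_top)
  show ?thesis using ev1 ev2
  proof eventually_elim
    case (elim x)
    have e: "exp (q*x) = 2 powr (b*x)" unfolding q_def powr_def by (simp add: ac_simps)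
    have "(q*x)^m < c * q^m * exp (q*x)" using elim(1) by (simp add: divide_less_eq)
    then have "q^m * x^m < q^m * (c * exp (q*x))" by (simp add: power_mult_distrib ac_simps)
    then have "x^m < c * exp (q*x)" using q by (simp add: mult_less_cancel_left_pos)
    then show ?case using e by simp
  qed
qed

lemma log2_seq: "filterlim (\<lambda>n::nat. log 2 (real n)) at_top sequentially"
proof -
  have l: "filterlim (\<lambda>y::real. (1 / ln 2) * ln y) at_top at_top"
    by (rule filterlim_tendsto_pos_mult_at_top[OF tendsto_const _ ln_at_top]) simp
  have "filterlim (\<lambda>n::nat. (1 / ln 2) * ln (real n)) at_top sequentially"
    using filterlim_compose[OF l filterlim_real_sequentially] .
  then show ?thesis unfolding log_def by simp
qed

lemma lower_part:
  fixes L a :: real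
  assumes lim: "(\<lambda>k. log 2 (real (ramsey_number k k)) / real k) \<longlonglongrightarrow> L"
    and a: "a < L^2"
  shows "\<forall>\<^sub>F n in sequentially. a < (log 2 (real n))^2 / real n * f_ratio n"
proof -
  define h where "h k = log 2 (real (ramsey_number k k)) / real k" for k
  have "(\<lambda>k. (h k)^2) \<longlonglongrightarrow> L^2" unfolding h_def by (intro tendsto_power lim)
  then have "eventually (\<lambda>k. a < (h k)^2) sequentially" by (rule order_tendstoD(1)[OF _ a])
  then obtain K1 where K1: "\<And>k. k \<ge> K1 \<Longrightarrow> a < (h k)^2" unfolding eventually_sequentially by blast
  define K where "K = max K1 1"
  show ?thesis unfolding eventually_sequentially
  proof (intro exI allI impI)
    fix n assume nK: "max (ramsey_number K K) 2 \<le> n"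
    define S where "S = {j. ramsey_number j j \<le> n}"
    have Ssub: "S \<subseteq> {..n}" unfolding S_def using rn_ge order_trans by auto
    have finS: "finite S" using finite_subset[OF Ssub] by simp
    have KS: "K \<in> S" unfolding S_def using nK by simp
    define k where "k = Max S"
    have kS: "k \<in> S" unfolding k_def using Max_in[OF finS] KS by blast
    have Kk: "K \<le> k" unfolding k_def using Max_ge[OF finS KS] .
    have k1: "1 \<le> k" "K1 \<le> k" using Kk unfolding K_def by auto
    have Rk: "ramsey_number k k \<le> n" using kS unfolding S_def by simp
    have Rk1: "n < ramsey_number (k+1) (k+1)"
    proof (rule ccontr)
      assume "\<not> n < ramsey_number (k+1) (k+1)"
      then have "k + 1 \<in> S" unfolding S_def by simp
      then have "k + 1 \<le> k" unfolding k_def using Max_ge[OF finS] by blast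
      then show False by simp
    qed
    have n0: "0 < n" using nK by simp
    have lg: "real n / (real k)^2 \<le> f_ratio n" using lower_graph[OF n0 _ Rk1] k1 by simp
    have R1: "1 \<le> ramsey_number k k" using rn_ge[of k] k1 by simp
    define x where "x = log 2 (real n)"
    have lr0: "0 \<le> log 2 (real (ramsey_number k k))" using R1 by simp
    have lrx: "log 2 (real (ramsey_number k k)) \<le> x"
      unfolding x_def using R1 Rk by (subst log_le_cancel_iff) auto
    have kpos: "0 < real k" using k1 by simp
    have "a < (h k)^2" using K1 k1 by simp
    also have "(h k)^2 = (log 2 (real (ramsey_number k k)))^2 / (real k)^2"
      unfolding h_def by (simp add: power_divide)
    also have "\<dots> \<le> x^2 / (real k)^2"
      using lr0 lrx kpos by (intro divide_right_mono power_mono) auto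
    also have "\<dots> = x^2 / real n * (real n / (real k)^2)" using n0 by simp
    also have "\<dots> \<le> x^2 / real n * f_ratio n" using lg n0 by (intro mult_left_mono) auto
    finally show "a < (log 2 (real n))^2 / real n * f_ratio n" unfolding x_def .
  qed
qed

lemma upper_part:
  fixes L a :: real
  assumes H: "\<forall>s t k :: nat. 0 < s \<longrightarrow> 0 < t \<longrightarrow> 0 < k \<longrightarrow> s * t \<le> k ^ 2 \<longrightarrow>
             ramsey_number s t \<le> ramsey_number k k"
    and lim: "(\<lambda>k. log 2 (real (ramsey_number k k)) / real k) \<longlonglongrightarrow> L"
    and a: "L^2 < a"
  shows "\<forall>\<^sub>F n in sequentially. (log 2 (real n))^2 / real n * f_ratio n < a"
proof -
  define h where "h k = log 2 (real (ramsey_number k k)) / real k" for k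
  have hL: "h \<longlonglongrightarrow> L" using lim unfolding h_def .
  have L0: "0 \<le> L"
  proof (rule LIMSEQ_le_const[OF hL])
    show "\<exists>N. \<forall>n\<ge>N. 0 \<le> h n"
    proof (intro exI allI impI)
      fix n :: nat assume "1 \<le> n"
      then have "1 \<le> ramsey_number n n" using rn_ge[of n] by simp
      then show "0 \<le> h n" unfolding h_def by simp
    qed
  qed
  define \<epsilon> where "\<epsilon> = a - L^2"
  have e: "0 < \<epsilon>" using a unfolding \<epsilon>_def by simp
  define F where "F u = (L+u)^2 * (1+u)^2 / (1 - 2*u)^2" for u :: real
  have Ft: "(F \<longlongrightarrow> F 0) (at_right 0)" unfolding F_def by (intro tendsto_intros) auto
  have F0: "F 0 = L^2" by (simp add: F_def)
  have "eventually (\<lambda>u. F u < L^2 + \<epsilon>/2) (at_right 0)"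
    using order_tendstoD(2)[OF Ft] F0 e by simp
  then obtain b where b: "b > 0" "\<forall>y>0. y < b \<longrightarrow> F y < L^2 + \<epsilon>/2"
    unfolding eventually_at_right_field by blast
  define u where "u = min (b/2) (1/8)"
  have u: "0 < u" "u \<le> 1/8" "u < b" using b unfolding u_def by auto
  have Fu: "F u < L^2 + \<epsilon>/2" using b u by blast
  define T where "T = nat \<lceil>1/u\<rceil>"
  have T1: "1/u \<le> real T" unfolding T_def by linarith
  have T1': "1 \<le> T"
  proof -
    have "8 \<le> 1/u" using u by (simp add: le_divide_eq)
    then show ?thesis using T1 by linarith
  qed
  have Tu: "1 / real T \<le> u"
    using T1 u T1' by (simp add: divide_le_eq mult.commute le_divide_eq)
  have Lu: "0 < L + u" using L0 u by simp
  define \<theta> where "\<theta> = (1-u)/(L+u)"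
  define \<theta>' where "\<theta>' = (1-2*u)/(L+u)"
  have th': "0 < \<theta>'" unfolding \<theta>'_def using Lu u by simp
  have th: "0 < \<theta>" unfolding \<theta>_def using Lu u by simp
  have "eventually (\<lambda>k. h k < L + u) sequentially" using order_tendstoD(2)[OF hL] u by simp
  then obtain K0 where K0: "\<And>k. k \<ge> K0 \<Longrightarrow> h k < L + u" unfolding eventually_sequentially by blast
  define A where "A = L^2 + \<epsilon>/2"
  define \<beta> where "\<beta> = L^2 + 3*\<epsilon>/4"
  have A: "0 < A" unfolding A_def using e by (simp add: add_nonneg_pos)
  define C5 where "C5 = (real T + 1 + \<theta>^3)^(T+1)"
  define C7 where "C7 = (1/A + 1 + real T)^T"
  have b5: "0 < real T + 1 + \<theta>^3"
  proof -
    have "0 < \<theta>^3" using th by simp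
    moreover have "0 \<le> real T" by simp
    ultimately show ?thesis by linarith
  qed
  have C5: "0 < C5" unfolding C5_def using b5 by (rule zero_less_power)
  have b7: "0 < 1/A + 1 + real T"
  proof -
    have "0 < 1/A" using A by simp
    moreover have "0 \<le> real T" by simp
    ultimately show ?thesis by linarith
  qed
  have C7: "0 < C7" unfolding C7_def using b7 by (rule zero_less_power)
  have evx: "eventually (\<lambda>x. 1 \<le> x \<and> (L+u)/u \<le> x \<and> (real K0 + 1)/\<theta>' \<le> x \<and> 8/(\<epsilon>*\<theta>'^3) \<le> x
      \<and> x^(3*(T+1)+2) \<le> \<epsilon>/(8*C5) * 2 powr (1*x) \<and> x^2 \<le> \<epsilon>/8 * 2 powr (u*x)
      \<and> x^(2*T+2) \<le> \<epsilon>/(8*C7) * 2 powr (1*x)) at_top"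
    using e C5 C7 u by (intro eventually_conj eventually_ge_at_top logpow) auto
  have evn: "eventually (\<lambda>n. let x = log 2 (real n) in 1 \<le> x \<and> (L+u)/u \<le> x \<and> (real K0 + 1)/\<theta>' \<le> x \<and> 8/(\<epsilon>*\<theta>'^3) \<le> x
      \<and> x^(3*(T+1)+2) \<le> \<epsilon>/(8*C5) * 2 powr (1*x) \<and> x^2 \<le> \<epsilon>/8 * 2 powr (u*x)
      \<and> x^(2*T+2) \<le> \<epsilon>/(8*C7) * 2 powr (1*x)) sequentially"
    using eventually_compose_filterlim[OF evx log2_seq] by (simp add: Let_def)
  show ?thesis using evn
  proof eventually_elim
    case (elim n)
    define x where "x = log 2 (real n)"
    have x1: "1 \<le> x" and x2: "(L+u)/u \<le> x" and x3: "(real K0 + 1)/\<theta>' \<le> x"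
      and x4: "8/(\<epsilon>*\<theta>'^3) \<le> x" and x5: "x^(3*(T+1)+2) \<le> \<epsilon>/(8*C5) * 2 powr x"
      and x6: "x^2 \<le> \<epsilon>/8 * 2 powr (u*x)" and x7: "x^(2*T+2) \<le> \<epsilon>/(8*C7) * 2 powr x"
      using elim unfolding x_def Let_def by auto
    have n0: "0 < n"
    proof (rule ccontr)
      assume "\<not> 0 < n" then have "n = 0" by simp
      then show False using x1 unfolding x_def by (simp add: log_def)
    qed
    have nx: "real n = 2 powr x" unfolding x_def using n0 by simp
    have n2: "2 \<le> n"
    proof -
      have "2 powr 1 \<le> (2::real) powr x" by (rule powr_mono[OF x1]) simp
      then have "2 \<le> real n" using nx by simp
      then show ?thesis by simp
    qed
    have npos: "0 < real n" using n0 by simp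
    define k where "k = nat \<lfloor>\<theta> * x\<rfloor>"
    have thx: "0 \<le> \<theta> * x" using th x1 by simp
    have kr: "real k \<le> \<theta> * x" "\<theta> * x - 1 < real k" unfolding k_def using thx by linarith+
    have thth: "\<theta>' * x \<le> \<theta> * x - 1"
    proof -
      have Lu0: "L + u \<noteq> 0" using Lu by simp
      have d: "\<theta> - \<theta>' = u / (L+u)" unfolding \<theta>_def \<theta>'_def by (simp add: diff_divide_distrib[symmetric])
      have dd: "\<theta> * x - \<theta>' * x = u / (L+u) * x" using d by (metis left_diff_distrib)
      have p: "0 \<le> u / (L+u)" using u Lu by simp
      have "u / (L+u) * ((L+u)/u) \<le> u / (L+u) * x" using mult_left_mono[OF x2 p] .
      moreover have "u / (L+u) * ((L+u)/u) = 1" using Lu0 u by simp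
      ultimately show ?thesis using dd by simp
    qed
    have kr2: "\<theta>' * x \<le> real k" using kr(2) thth by simp
    have kK0: "real K0 + 1 \<le> real k" using x3 th' kr2 by (simp add: divide_le_eq mult.commute)
    have k1: "1 \<le> k" "K0 \<le> k" using kK0 by auto
    have xpos0: "0 < x" using x1 by simp
    have tx: "0 < \<theta>' * x" using th' xpos0 by simp
    have x3ge: "1 \<le> x^3" using x1 by (simp add: one_le_power)
    have x2ge: "1 \<le> x^2" using x1 by (simp add: one_le_power)
    have B1: "x^2 / (real k)^3 \<le> \<epsilon>/8"
    proof -
      have "(\<theta>' * x)^3 \<le> (real k)^3" using kr2 tx by (intro power_mono) auto
      then have "x^2 / (real k)^3 \<le> x^2 / (\<theta>' * x)^3"
        using tx by (intro divide_left_mono mult_pos_pos) auto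
      also have "\<dots> = 1 / (\<theta>'^3 * x)" using xpos0 th'
        by (simp add: power_mult_distrib power3_eq_cube power2_eq_square field_simps)
      also have "\<dots> \<le> \<epsilon>/8"
      proof -
        have c: "0 < \<epsilon> * \<theta>'^3" using e th' by simp
        have "8 \<le> x * (\<epsilon> * \<theta>'^3)" using x4 c by (simp add: pos_divide_le_eq)
        then show ?thesis using xpos0 th' e by (simp add: field_simps)
      qed
      finally show ?thesis .
    qed
    have B2: "x^2 * real ((T+1+k^3)^(T+1)) / real n \<le> \<epsilon>/8"
    proof -
      have "real ((T+1+k^3)^(T+1)) = (real T + 1 + (real k)^3)^(T+1)" by (simp only: of_nat_power of_nat_add of_nat_1)
      also have "\<dots> \<le> (real T + 1 + (\<theta> * x)^3)^(T+1)"
      proof -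
        have "(real k)^3 \<le> (\<theta> * x)^3" using kr(1) by (intro power_mono) auto
        then show ?thesis by (intro power_mono) auto
      qed
      also have "\<dots> \<le> ((real T + 1 + \<theta>^3) * x^3)^(T+1)"
      proof (intro power_mono)
        have "real T + 1 \<le> (real T + 1) * x^3" using x3ge by simp
        then show "real T + 1 + (\<theta> * x)^3 \<le> (real T + 1 + \<theta>^3) * x^3"
          by (simp add: power_mult_distrib algebra_simps)
        show "0 \<le> real T + 1 + (\<theta> * x)^3" using thx by simp
      qed
      also have "\<dots> = C5 * (x^3)^(T+1)" unfolding C5_def by (rule power_mult_distrib)
      also have "\<dots> = C5 * x^(3*(T+1))" by (simp only: power_mult)
      finally have P: "real ((T+1+k^3)^(T+1)) \<le> C5 * x^(3*(T+1))" .
      have "x^2 * real ((T+1+k^3)^(T+1)) \<le> x^2 * (C5 * x^(3*(T+1)))"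
        using P by (intro mult_left_mono) auto
      also have "\<dots> = C5 * (x^(3*(T+1)) * x^2)" by (simp only: ac_simps)
      also have "\<dots> = C5 * x^(3*(T+1)+2)" by (simp only: power_add)
      also have "\<dots> \<le> C5 * (\<epsilon>/(8*C5) * 2 powr x)" using x5 C5 by (intro mult_left_mono) auto
      also have "\<dots> = \<epsilon>/8 * real n" using C5 nx by simp
      finally have "x^2 * real ((T+1+k^3)^(T+1)) \<le> \<epsilon>/8 * real n" .
      then show ?thesis using npos by (simp add: pos_divide_le_eq)
    qed
    have hB: "x^2 / (real k)^3 + x^2 * real ((T+1+k^3)^(T+1)) / real n \<le> \<beta>"
    proof -
      have "0 \<le> L^2" by simp
      then show ?thesis using B1 B2 e unfolding \<beta>_def by linarith
    qed
    have hC: "\<And>w::nat. T < w \<Longrightarrow> real w < x^2 / A \<Longrightarrow>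
       x^2 * (1 + 1 / real T)^2 / (real k)^2 + x^2 * (real (ramsey_number k k) + real ((w+1+T)^T)) / real n \<le> \<beta>"
    proof -
      fix w :: nat assume wT: "T < w" and wA: "real w < x^2 / A"
      have Tpos: "0 < real T" using T1' by simp
      have C1: "x^2 * (1 + 1 / real T)^2 / (real k)^2 \<le> F u"
      proof -
        have a1: "(1 + 1 / real T)^2 \<le> (1 + u)^2" using Tu Tpos by (intro power_mono) auto
        have a2: "(\<theta>' * x)^2 \<le> (real k)^2" using kr2 tx by (intro power_mono) auto
        have "x^2 * (1 + 1 / real T)^2 / (real k)^2 \<le> x^2 * (1 + u)^2 / (real k)^2"
          using a1 by (intro divide_right_mono mult_left_mono) auto
        also have "\<dots> \<le> x^2 * (1 + u)^2 / (\<theta>' * x)^2"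
          using a2 tx by (intro divide_left_mono mult_pos_pos) auto
        also have "\<dots> = (1 + u)^2 / \<theta>'^2" using xpos0 by (simp add: power_mult_distrib)
        also have "\<dots> = F u" unfolding F_def \<theta>'_def by (simp add: power_divide)
        finally show ?thesis .
      qed
      have C2: "x^2 * real (ramsey_number k k) / real n \<le> \<epsilon>/8"
      proof -
        have kpos: "0 < real k" using k1 by simp
        have R1: "1 \<le> ramsey_number k k" using rn_ge[of k] k1 by simp
        have Rpos: "0 < real (ramsey_number k k)" using R1 by simp
        have "h k < L + u" using K0 k1 by simp
        then have "log 2 (real (ramsey_number k k)) < (L + u) * real k"
          unfolding h_def using kpos by (simp add: divide_less_eq)
        also have "\<dots> \<le> (L + u) * (\<theta> * x)" using kr(1) Lu by (intro mult_left_mono) auto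
        also have "\<dots> = (1 - u) * x" unfolding \<theta>_def using Lu by simp
        finally have lr: "log 2 (real (ramsey_number k k)) < (1 - u) * x" .
        have "real (ramsey_number k k) = 2 powr (log 2 (real (ramsey_number k k)))" using Rpos by simp
        also have "\<dots> \<le> 2 powr ((1 - u) * x)" using lr by (intro powr_mono) auto
        finally have Rb: "real (ramsey_number k k) \<le> 2 powr ((1 - u) * x)" .
        have "x^2 * real (ramsey_number k k) \<le> x^2 * 2 powr ((1 - u) * x)"
          using Rb by (intro mult_left_mono) auto
        also have "\<dots> \<le> \<epsilon>/8 * 2 powr (u*x) * 2 powr ((1 - u) * x)"
          using x6 by (intro mult_right_mono) auto
        also have "\<dots> = \<epsilon>/8 * 2 powr x"
        proof -
          have "2 powr (u*x) * 2 powr ((1 - u) * x) = (2::real) powr (u*x + (1-u)*x)" by (simp add: powr_add)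
          also have "u*x + (1-u)*x = x" by (simp add: algebra_simps)
          finally show ?thesis by simp
        qed
        finally have "x^2 * real (ramsey_number k k) \<le> \<epsilon>/8 * real n" using nx by simp
        then show ?thesis using npos by (simp add: pos_divide_le_eq)
      qed
      have C3: "x^2 * real ((w+1+T)^T) / real n \<le> \<epsilon>/8"
      proof -
        have "real ((w+1+T)^T) = (real w + 1 + real T)^T" by (simp only: of_nat_power of_nat_add of_nat_1)
        also have "\<dots> \<le> (x^2 / A + 1 + real T)^T" using wA by (intro power_mono) auto
        also have "\<dots> \<le> ((1/A + 1 + real T) * x^2)^T"
        proof (intro power_mono)
          have "1 + real T \<le> (1 + real T) * x^2" using x2ge by simp
          then show "x^2 / A + 1 + real T \<le> (1/A + 1 + real T) * x^2"
            by (simp add: algebra_simps)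
          show "0 \<le> x^2 / A + 1 + real T" using A by simp
        qed
        also have "\<dots> = C7 * (x^2)^T" unfolding C7_def by (rule power_mult_distrib)
        also have "\<dots> = C7 * x^(2*T)" by (simp only: power_mult)
        finally have P: "real ((w+1+T)^T) \<le> C7 * x^(2*T)" .
        have "x^2 * real ((w+1+T)^T) \<le> x^2 * (C7 * x^(2*T))"
          using P by (intro mult_left_mono) auto
        also have "\<dots> = C7 * (x^(2*T) * x^2)" by (simp only: ac_simps)
        also have "\<dots> = C7 * x^(2*T+2)" by (simp only: power_add)
        also have "\<dots> \<le> C7 * (\<epsilon>/(8*C7) * 2 powr x)" using x7 C7 by (intro mult_left_mono) auto
        also have "\<dots> = \<epsilon>/8 * real n" using C7 nx by simp
        finally have "x^2 * real ((w+1+T)^T) \<le> \<epsilon>/8 * real n" .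
        then show ?thesis using npos by (simp add: pos_divide_le_eq)
      qed
      have "x^2 * (real (ramsey_number k k) + real ((w+1+T)^T)) / real n
          = x^2 * real (ramsey_number k k) / real n + x^2 * real ((w+1+T)^T) / real n"
        by (simp add: distrib_left add_divide_distrib)
      then show "x^2 * (1 + 1 / real T)^2 / (real k)^2 + x^2 * (real (ramsey_number k k) + real ((w+1+T)^T)) / real n \<le> \<beta>"
        using C1 C2 C3 Fu e unfolding \<beta>_def by linarith
    qed
    have hA: "A \<le> \<beta>" unfolding A_def \<beta>_def using e by simp
    have core: "x^2 / real n * (real (chromatic_number n E) / real (clique_number n E)) \<le> \<beta>"
      if "graph_on n E" for E
      by (rule core_upper[OF H n2 x_def T1' k1(1) A hA hB hC that])
    have xpos: "0 < x^2 / real n" using x1 npos by simp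
    have "f_ratio n \<le> \<beta> / (x^2 / real n)"
    proof (rule f_ratio_le)
      fix E assume "graph_on n E"
      from core[OF this] have "real (chromatic_number n E) / real (clique_number n E) * (x^2 / real n) \<le> \<beta>"
        by (simp only: mult.commute)
      then show "real (chromatic_number n E) / real (clique_number n E) \<le> \<beta> / (x^2 / real n)"
        by (subst pos_le_divide_eq[OF xpos])
    qed
    then have "f_ratio n * (x^2 / real n) \<le> \<beta>" by (subst (asm) pos_le_divide_eq[OF xpos])
    then have "x^2 / real n * f_ratio n \<le> \<beta>" by (simp only: mult.commute)
    also have "\<beta> < a"
    proof -
      have "\<beta> = a - \<epsilon>/4" unfolding \<beta>_def \<epsilon>_def by (simp add: field_simps)
      then show ?thesis using e by simp
    qed
    finally show ?case unfolding x_def .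
  qed
qed

theorem theorem1p2:
  fixes L :: real
  assumes "\<forall>s t k :: nat. 0 < s \<longrightarrow> 0 < t \<longrightarrow> 0 < k \<longrightarrow> s * t \<le> k ^ 2 \<longrightarrow>
             ramsey_number s t \<le> ramsey_number k k"
    and "(\<lambda>k. log 2 (real (ramsey_number k k)) / real k) \<longlonglongrightarrow> L"
  shows "(\<lambda>n. (log 2 (real n))^2 / real n * f_ratio n) \<longlonglongrightarrow> L^2"
proof (rule order_tendstoI)
  fix a assume "a < L^2"
  then show "\<forall>\<^sub>F n in sequentially. a < (log 2 (real n))^2 / real n * f_ratio n"
    by (rule lower_part[OF assms(2)])
next
  fix a assume "L^2 < a"
  then show "\<forall>\<^sub>F n in sequentially. (log 2 (real n))^2 / real n * f_ratio n < a"
    by (rule upper_part[OF assms(1) assms(2)])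
qed

end
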